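(* Let $n \ge 1$ and $t$ be integers with $0 \le t \le n/3$, and assume $n \ge 4$ if $t = 0$. Put $m = n - 3t$. Then the maximum of $\mathrm{mis}(G)$ over all graphs $G$ on $n$ vertices that contain no induced triangle matching of size $t+1$ equals \[ \mathrm{mis}_t(n)=\begin{cases} 3^t\cdot 2^{m/2} & \text{if } m \text{ is even},\\ 3^{t-1}\cdot 2^{(m+3)/2} & \text{if } m \text{ is odd and } t>0,\\ 5\cdot 2^{(n-5)/2} & \text{if } m \text{ is odd and } t=0. \end{cases} \]
   Context: All graphs are finite and simple. For a graph $G$, $\mathrm{mis}(G)$ denotes the number of maximal independent sets of $G$ (independent sets not properly contained in another independent set). An induced triangle matching in $G$ is a set of vertex-disjoint triangles in $G$ whose vertex set induces in $G$ exactly the disjoint union of these triangles (no edges of $G$ between different triangles); its size is the number of triangles. $\mathrm{mis}_t(n)$ is the maximum of $\mathrm{mis}(G)$ over all $n$-vertex graphs $G$ containing no induced triangle matching of size $t+1$. (The case $t=0$ corresponds to triangle-free graphs.) *)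

theory Defs
  imports Main
begin

definition simple_graph :: "'a set \<Rightarrow> 'a set set \<Rightarrow> bool" where
  "simple_graph V E \<longleftrightarrow> finite V \<and>
     (\<forall>e\<in>E. \<exists>u v. e = {u, v} \<and> u \<noteq> v \<and> u \<in> V \<and> v \<in> V)"

definition adj :: "'a set set \<Rightarrow> 'a \<Rightarrow> 'a \<Rightarrow> bool" where
  "adj E u v \<longleftrightarrow> {u, v} \<in> E"

definition independent_set :: "'a set \<Rightarrow> 'a set set \<Rightarrow> 'a set \<Rightarrow> bool" where
  "independent_set V E S \<longleftrightarrow> S \<subseteq> V \<and> (\<forall>u\<in>S. \<forall>v\<in>S. \<not> adj E u v)"

definition maximal_independent_set :: "'a set \<Rightarrow> 'a set set \<Rightarrow> 'a set \<Rightarrow> bool" where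
  "maximal_independent_set V E S \<longleftrightarrow> independent_set V E S \<and>
     (\<forall>S'. independent_set V E S' \<and> S \<subseteq> S' \<longrightarrow> S' = S)"

definition mis :: "'a set \<Rightarrow> 'a set set \<Rightarrow> nat" where
  "mis V E = card {S. maximal_independent_set V E S}"

definition triangle :: "'a set \<Rightarrow> 'a set set \<Rightarrow> 'a set \<Rightarrow> bool" where
  "triangle V E T \<longleftrightarrow> T \<subseteq> V \<and> card T = 3 \<and> (\<forall>u\<in>T. \<forall>v\<in>T. u \<noteq> v \<longrightarrow> adj E u v)"

definition induced_triangle_matching :: "'a set \<Rightarrow> 'a set set \<Rightarrow> 'a set set \<Rightarrow> bool" where
  "induced_triangle_matching V E M \<longleftrightarrow>
     (\<forall>T\<in>M. triangle V E T) \<and>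
     (\<forall>T1\<in>M. \<forall>T2\<in>M. T1 \<noteq> T2 \<longrightarrow> T1 \<inter> T2 = {} \<and>
        (\<forall>u\<in>T1. \<forall>v\<in>T2. \<not> adj E u v))"

definition has_induced_triangle_matching :: "'a set \<Rightarrow> 'a set set \<Rightarrow> nat \<Rightarrow> bool" where
  "has_induced_triangle_matching V E k \<longleftrightarrow>
     (\<exists>M. induced_triangle_matching V E M \<and> card M = k)"

definition mis_t :: "nat \<Rightarrow> nat \<Rightarrow> nat" where
  "mis_t t n = Max {mis {0..<n} E | E. simple_graph {0..<n} E \<and>
                       \<not> has_induced_triangle_matching {0..<n} E (t + 1)}"

end

theory Submission
  imports Defs
begin

definition hh :: "nat \<Rightarrow> nat" where
 "hh n = (if n \<le> 1 then 1 else if n \<le> 3 then 2 else if even n then 2^(n div 2) else 5 * 2^((n-5) div 2))"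

definition G :: "nat \<Rightarrow> nat \<Rightarrow> nat" where
 "G s m = (if s = 0 then hh m else if even m then 3^s * 2^(m div 2) else 3^(s-1) * 2^((m+3) div 2))"

definition B :: "nat \<Rightarrow> nat \<Rightarrow> nat" where
 "B n t = G (min t (n div 3)) (n - 3 * min t (n div 3))"

lemma par_cases: fixes m :: nat obtains j where "m = 2*j" | j where "m = 2*j+1"
  by (metis oddE evenE)

lemma hh_cases: fixes m :: nat
  obtains "m = 0" | "m = 1" | "m = 2" | "m = 3" | j where "m = 2*j+4" | j where "m = 2*j+5"
proof -
  consider "m < 4" | "m \<ge> 4" by linarith
  then show ?thesis
  proof cases
    case 1 then have "m = 0 \<or> m = 1 \<or> m = 2 \<or> m = 3" by arith
    then show ?thesis using that by blast
  next
    case 2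
    then obtain k where "m = k + 4" by (metis add.commute le_Suc_ex)
    then show ?thesis using that by (cases k rule: par_cases) auto
  qed
qed

lemma Gs1: "G t m \<le> G t (Suc m)"
proof (cases t)
  case 0 then show ?thesis
    by (cases m rule: hh_cases) (auto simp: G_def hh_def power_add)
next
  case (Suc s) then show ?thesis
    by (cases m rule: par_cases) (auto simp: G_def power_add)
qed

lemma Gs2: "2 * G t m \<le> G t (m+2)"
proof (cases t)
  case 0 then show ?thesis
    by (cases m rule: hh_cases) (auto simp: G_def hh_def power_add)
next
  case (Suc s) then show ?thesis
    by (cases m rule: par_cases) (auto simp: G_def power_add)
qed

lemma G5: assumes "t \<ge> 1" shows "8 * G t m \<le> 3 * G t (m+3)"
proof (cases t)
  case 0 then show ?thesis using assms by simp
next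
  case (Suc s) then show ?thesis
    by (cases m rule: par_cases) (auto simp: G_def power_add)
qed

lemma G3: "m \<ge> 1 \<Longrightarrow> 5 * G 0 m \<le> 2 * G 0 (m+3)"
  by (cases m rule: hh_cases) (auto simp: G_def hh_def power_add)

lemma G4: "3 * G s m \<le> G (Suc s) m"
proof (cases s)
  case 0 then show ?thesis
    by (cases m rule: hh_cases) (auto simp: G_def hh_def power_add)
next
  case (Suc s) then show ?thesis
    by (cases m rule: par_cases) (auto simp: G_def power_add)
qed

lemma B_high: "3*t \<le> n \<Longrightarrow> B n t = G t (n - 3*t)"
  unfolding B_def by (simp add: min_def) (metis div_le_mono le_antisym nonzero_mult_div_cancel_left zero_neq_numeral)

lemma B_low: assumes "q < t" "j < 6" shows "B (3*q+j) t = (if j < 3 then G q j else G (Suc q) (j-3))"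
proof (cases "j < 3")
  case True
  then have "(3*q+j) div 3 = q" by simp
  then show ?thesis using assms True unfolding B_def by (simp add: min_def)
next
  case False
  then have d: "(3*q+j) div 3 = Suc q" using assms by simp
  have m: "min t (Suc q) = Suc q" using assms by simp
  have "3*q+j - 3 * Suc q = j - 3" by simp
  then show ?thesis using False unfolding B_def d m by simp
qed

lemma B_split: fixes n t :: nat
  obtains "3*t \<le> n" | q r where "n = 3*q+r" "q < t" "r < 3"
proof -
  have "n = 3*(n div 3) + n mod 3" by simp
  moreover have "n mod 3 < 3" by simp
  moreover have "\<not> 3*t \<le> n \<Longrightarrow> n div 3 < t" by linarith
  ultimately show ?thesis using that by blast
qed

lemma r3: "(r::nat) < 3 \<Longrightarrow> r = 0 \<or> r = 1 \<or> r = 2" by arith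

lemma BS1: "B n t \<le> B (Suc n) t"
proof (cases rule: B_split[where n=n and t=t])
  case 1
  then have "3*t \<le> Suc n" by simp
  then show ?thesis using 1 B_high[of t n] B_high[of t "Suc n"] Gs1[of t "n - 3*t"]
    by (simp add: Suc_diff_le)
next
  case (2 q r)
  have a: "B n t = G q r" using B_low[of q t r] 2 by simp
  have b: "B (Suc n) t = (if r+1 < 3 then G q (r+1) else G (Suc q) (r+1-3))"
    using B_low[of q t "r+1"] 2 by simp
  show ?thesis using r3[OF 2(3)] Gs1[of q r] unfolding a b
    by (cases q) (auto simp: G_def hh_def)
qed

lemma BS2: "2 * B n t \<le> B (n+2) t"
proof (cases rule: B_split[where n=n and t=t])
  case 1
  then have h2: "3*t \<le> n+2" by simp
  have e: "n + 2 - 3*t = n - 3*t + 2" using 1 by simp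
  show ?thesis unfolding B_high[OF 1] B_high[OF h2] e by (rule Gs2)
next
  case (2 q r)
  have a: "B n t = G q r" using B_low[of q t r] 2 by simp
  have b: "B (n+2) t = (if r+2 < 3 then G q (r+2) else G (Suc q) (r+2-3))"
    using B_low[of q t "r+2"] 2 by (simp add: add.assoc)
  show ?thesis using r3[OF 2(3)] Gs2[of q r] unfolding a b
    by (cases q) (auto simp: G_def hh_def)
qed

lemma B5: assumes "t \<ge> 1" shows "8 * B n t \<le> 3 * B (n+3) t"
proof (cases rule: B_split[where n=n and t=t])
  case 1
  then have h2: "3*t \<le> n+3" by simp
  have e: "n + 3 - 3*t = n - 3*t + 3" using 1 by simp
  show ?thesis unfolding B_high[OF 1] B_high[OF h2] e by (rule G5[OF assms])
next
  case (2 q r)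
  have a: "B n t = G q r" using B_low[of q t r] 2 by simp
  have b: "B (n+3) t = (if r+3 < 3 then G q (r+3) else G (Suc q) (r+3-3))"
    using B_low[of q t "r+3"] 2 by (simp add: add.assoc)
  show ?thesis using r3[OF 2(3)] unfolding a b
    by (cases q) (auto simp: G_def hh_def)
qed

lemma B3: assumes "n \<ge> 1" shows "5 * B n t \<le> 2 * B (n+3) t"
proof (cases "t = 0")
  case True
  then show ?thesis using B_high[of t n] B_high[of t "n+3"] G3[of n] assms by simp
next
  case False
  then have "8 * B n t \<le> 3 * B (n+3) t" using B5 by simp
  then show ?thesis by linarith
qed

lemma B4: "3 * B n t \<le> B (n+3) (Suc t)"
proof -
  have "min (Suc t) ((n+3) div 3) = Suc (min t (n div 3))" by simp
  then show ?thesis unfolding B_def using G4 by simp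
qed

lemma B_mono: "a \<le> b \<Longrightarrow> B a t \<le> B b t"
  by (induction b rule: dec_induct) (auto intro: order_trans BS1)

lemma BK: "k \<ge> 4 \<Longrightarrow> k * B n t \<le> B (n+k) t"
proof (induction k arbitrary: n rule: less_induct)
  case (less k)
  show ?case
  proof (cases "k = 4 \<or> k = 5")
    case True
    then show ?thesis
    proof
      assume k: "k = 4"
      have "2 * B n t \<le> B (n+2) t" by (rule BS2)
      moreover have "2 * B (n+2) t \<le> B (n+4) t" using BS2[of "n+2" t] by (simp add: numeral_eq_Suc)
      ultimately show ?thesis unfolding k by linarith
    next
      assume k: "k = 5"
      have "2 * B n t \<le> B (n+2) t" by (rule BS2)
      moreover have "5 * B (n+2) t \<le> 2 * B (n+5) t" using B3[of "n+2" t] by (simp add: numeral_eq_Suc)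
      ultimately show ?thesis unfolding k by linarith
    qed
  next
    case False
    then have k6: "k \<ge> 6" using less.prems by simp
    have ih: "(k-2) * B (n+2) t \<le> B (n+2+(k-2)) t"
      by (rule less.IH) (use k6 in auto)
    have "k * B n t \<le> (2*(k-2)) * B n t" using k6 by (intro mult_le_mono1) simp
    also have "\<dots> = (k-2) * (2 * B n t)" by simp
    also have "\<dots> \<le> (k-2) * B (n+2) t" by (intro mult_le_mono2 BS2)
    also note ih
    finally have fin: "k * B n t \<le> B (n+2+(k-2)) t" .
    have e: "n+2+(k-2) = n + k" using k6 by simp
    show ?thesis using fin unfolding e .
  qed
qed

lemma N2: assumes "n \<ge> 4" shows "B (n-3) t + 2*B (n-4) t \<le> B n t"
proof -
  obtain p where p: "n = p + 4" using assms by (metis add.commute le_Suc_ex)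
  have "B (p+1) t \<le> B (p+2) t" by (rule B_mono) simp
  moreover have "2 * B p t \<le> B (p+2) t" by (rule BS2)
  moreover have "2 * B (p+2) t \<le> B (p+4) t" using BS2[of "p+2" t] by (simp add: numeral_eq_Suc)
  ultimately show ?thesis unfolding p by (simp add: numeral_eq_Suc)
qed

lemma N3: assumes "n \<ge> 5" shows "B (n-3) t + 3*B (n-5) t \<le> B n t"
proof -
  obtain p where p: "n = p + 5" using assms by (metis add.commute le_Suc_ex)
  have "2 * B p t \<le> B (p+2) t" by (rule BS2)
  moreover have "5 * B (p+2) t \<le> 2 * B (p+5) t" using B3[of "p+2" t] by (simp add: numeral_eq_Suc)
  ultimately show ?thesis unfolding p by (simp add: numeral_eq_Suc)
qed

lemma N5: assumes "n \<ge> 4" "t \<ge> 1" shows "2*B (n-3) t + B (n-4) t \<le> B n t"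
proof -
  obtain p where p: "n = p + 4" using assms by (metis add.commute le_Suc_ex)
  have "8 * B (p+1) t \<le> 3 * B (p+4) t" using B5[OF assms(2), of "p+1"] by (simp add: numeral_eq_Suc)
  moreover have "4 * B p t \<le> B (p+4) t" using BK[of 4 p t] by simp
  ultimately show ?thesis unfolding p by (simp add: numeral_eq_Suc)
qed

lemma N4: assumes "n \<ge> 3" shows "3*B (n-3) t \<le> B n (Suc t)"
  using B4[of "n-3" t] assms by simp

lemma NK: assumes "d \<noteq> 2" "d+1 \<le> n" shows "(d+1) * B (n-(d+1)) t \<le> B n t"
proof -
  consider "d = 0" | "d = 1" | "d \<ge> 3" using assms(1) by arith
  then show ?thesis
  proof cases
    case 1 then show ?thesis using assms by (simp add: B_mono)
  next
    case 2
    then obtain p where p: "n = p + 2" using assms by (metis add.commute le_Suc_ex one_add_one)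
    show ?thesis using 2 BS2[of p t] unfolding p by simp
  next
    case 3 then show ?thesis using assms BK[of "d+1" "n-(d+1)" t] by simp
  qed
qed

definition nbr :: "'a set set \<Rightarrow> 'a set \<Rightarrow> 'a \<Rightarrow> 'a set" where
  "nbr E V v = {w \<in> V. adj E v w}"
definition cl :: "'a set set \<Rightarrow> 'a set \<Rightarrow> 'a set \<Rightarrow> 'a set" where
  "cl E V X = X \<union> {w \<in> V. \<exists>x\<in>X. adj E x w}"
definition loopfree :: "'a set set \<Rightarrow> bool" where
  "loopfree E \<longleftrightarrow> (\<forall>u. \<not> adj E u u)"
definition cls :: "'a set \<Rightarrow> 'a set set \<Rightarrow> 'a set \<Rightarrow> 'a set \<Rightarrow> 'a set set" where
  "cls V E X Y = {S. maximal_independent_set V E S \<and> X \<subseteq> S \<and> S \<inter> Y = {}}"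

lemma adj_sym: "adj E u v = adj E v u" by (simp add: adj_def insert_commute)

lemma mis_char:
  assumes "loopfree E"
  shows "maximal_independent_set V E S \<longleftrightarrow> independent_set V E S \<and> (\<forall>w\<in>V-S. \<exists>s\<in>S. adj E w s)"
proof
  assume m: "maximal_independent_set V E S"
  then have i: "independent_set V E S" by (simp add: maximal_independent_set_def)
  show "independent_set V E S \<and> (\<forall>w\<in>V-S. \<exists>s\<in>S. adj E w s)"
  proof (rule conjI[OF i], rule ballI, rule ccontr)
    fix w assume w: "w \<in> V - S" and n: "\<not> (\<exists>s\<in>S. adj E w s)"
    have "independent_set V E (insert w S)"
      using i w n assms unfolding independent_set_def loopfree_def by (auto simp: adj_sym)
    hence "insert w S = S" using m unfolding maximal_independent_set_def by blast
    thus False using w by blast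
  qed
next
  assume h: "independent_set V E S \<and> (\<forall>w\<in>V-S. \<exists>s\<in>S. adj E w s)"
  show "maximal_independent_set V E S"
    unfolding maximal_independent_set_def
  proof (intro conjI allI impI)
    show "independent_set V E S" using h by simp
    fix S' assume s: "independent_set V E S' \<and> S \<subseteq> S'"
    show "S' = S"
    proof (rule ccontr)
      assume "S' \<noteq> S"
      then obtain w where w: "w \<in> S'" "w \<notin> S" using s by blast
      then have "w \<in> V - S" using s unfolding independent_set_def by blast
      then obtain x where "x \<in> S" "adj E w x" using h by blast
      then show False using s w unfolding independent_set_def by blast
    qed
  qed
qed

lemma mis_fin: "finite V \<Longrightarrow> finite {S. maximal_independent_set V E S}"
  by (rule finite_subset[of _ "Pow V"])
     (auto simp: maximal_independent_set_def independent_set_def)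

lemma cls_fin: "finite V \<Longrightarrow> finite (cls V E X Y)"
  by (rule finite_subset[OF _ mis_fin[of V E]]) (auto simp: cls_def)

lemma branch:
  assumes lf: "loopfree E" and m: "maximal_independent_set V E S" and X: "X \<subseteq> S" and Y: "S \<inter> Y = {}"
  shows "maximal_independent_set (V - (cl E V X \<union> Y)) E (S - X)"
proof -
  have i: "independent_set V E S" and d: "\<forall>w\<in>V-S. \<exists>s\<in>S. adj E w s" using m mis_char[OF lf] by auto
  have SV: "S \<subseteq> V" using i by (simp add: independent_set_def)
  have sub: "S - X \<subseteq> V - (cl E V X \<union> Y)"
  proof
    fix s assume s: "s \<in> S - X"
    have "s \<notin> Y" using s Y by blast
    moreover have "s \<notin> cl E V X"
      using s X i unfolding cl_def independent_set_def by auto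
    ultimately show "s \<in> V - (cl E V X \<union> Y)" using s SV by blast
  qed
  have ind: "independent_set (V - (cl E V X \<union> Y)) E (S - X)"
    using i sub by (auto simp: independent_set_def)
  have dom: "\<forall>w\<in>(V - (cl E V X \<union> Y)) - (S - X). \<exists>s\<in>S-X. adj E w s"
  proof
    fix w assume w: "w \<in> (V - (cl E V X \<union> Y)) - (S - X)"
    then have "w \<notin> X" unfolding cl_def by blast
    then have "w \<in> V - S" using w by blast
    then obtain s where s: "s \<in> S" "adj E w s" using d by blast
    have "s \<notin> X" using w s unfolding cl_def by (auto simp: adj_sym)
    then show "\<exists>s\<in>S-X. adj E w s" using s by blast
  qed
  show ?thesis using ind dom mis_char[OF lf] by blast
qed

lemma cls_le:
  assumes lf: "loopfree E" and fin: "finite V"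
  shows "card (cls V E X Y) \<le> mis (V - (cl E V X \<union> Y)) E"
  unfolding mis_def
proof (rule card_inj_on_le)
  show "inj_on (\<lambda>S. S - X) (cls V E X Y)" unfolding inj_on_def cls_def by blast
  show "(\<lambda>S. S - X) ` cls V E X Y \<subseteq> {S. maximal_independent_set (V - (cl E V X \<union> Y)) E S}"
    using branch[OF lf] unfolding cls_def by blast
  show "finite {S. maximal_independent_set (V - (cl E V X \<union> Y)) E S}"
    using fin by (intro mis_fin) simp
qed

lemma dominate:
  assumes lf: "loopfree E" and m: "maximal_independent_set V E S" and v: "v \<in> V"
  shows "v \<in> S \<or> (\<exists>u\<in>nbr E V v. u \<in> S)"
proof -
  have i: "independent_set V E S" and d: "\<forall>w\<in>V-S. \<exists>s\<in>S. adj E w s" using m mis_char[OF lf] by auto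
  then show ?thesis using v unfolding nbr_def independent_set_def by blast
qed

lemma cls_empty:
  assumes "x \<in> X" "y \<in> X" "adj E x y"
  shows "cls V E X Y = {}"
  using assms unfolding cls_def maximal_independent_set_def independent_set_def by blast

lemma cl_single: "cl E V {u} = insert u (nbr E V u)"
  unfolding cl_def nbr_def by auto

lemma nbr_fin: "finite V \<Longrightarrow> finite (nbr E V u)"
  unfolding nbr_def by simp

lemma card_cl_single:
  assumes "loopfree E" "finite V"
  shows "card (cl E V {u}) = Suc (card (nbr E V u))"
proof -
  have "u \<notin> nbr E V u" using assms unfolding nbr_def loopfree_def by auto
  then show ?thesis unfolding cl_single using nbr_fin[OF assms(2)] by simp
qed

lemma cl_sub: "X \<subseteq> V \<Longrightarrow> cl E V X \<subseteq> V"
  unfolding cl_def by auto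

lemma itm_mono: assumes "has_induced_triangle_matching V' E k" "V' \<subseteq> V"
  shows "has_induced_triangle_matching V E k"
proof -
  obtain M where M: "induced_triangle_matching V' E M" "card M = k"
    using assms(1) unfolding has_induced_triangle_matching_def by blast
  have tri: "triangle V E T" if "T \<in> M" for T
  proof -
    have "triangle V' E T" using M(1) that by (simp add: induced_triangle_matching_def)
    then show ?thesis using assms(2) by (auto simp: triangle_def)
  qed
  have "induced_triangle_matching V E M" using M(1) tri by (simp add: induced_triangle_matching_def)
  then show ?thesis using M(2) unfolding has_induced_triangle_matching_def by blast
qed

lemma mis_empty: "mis {} E = 1"
proof -
  have "{S. maximal_independent_set {} E S} = {{}}"
    unfolding maximal_independent_set_def independent_set_def by auto
  then show ?thesis unfolding mis_def by simp
qed

lemma card_cover3: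
  assumes "finite P" "finite Q" "finite R" "X \<subseteq> P \<union> Q \<union> R"
  shows "card X \<le> card P + card Q + card R"
proof -
  have "card X \<le> card (P \<union> Q \<union> R)" using assms by (intro card_mono) auto
  also have "\<dots> \<le> card (P \<union> Q) + card R" by (rule card_Un_le)
  also have "\<dots> \<le> card P + card Q + card R" using card_Un_le[of P Q] by simp
  finally show ?thesis .
qed

lemma card_cover4:
  assumes "finite P" "finite Q" "finite R" "finite U" "X \<subseteq> P \<union> Q \<union> R \<union> U"
  shows "card X \<le> card P + card Q + card R + card U"
proof -
  have "card X \<le> card (P \<union> Q \<union> R \<union> U)" using assms by (intro card_mono) auto
  also have "\<dots> \<le> card (P \<union> Q \<union> R) + card U" by (rule card_Un_le)
  also have "\<dots> \<le> card P + card Q + card R + card U"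
    using card_Un_le[of "P \<union> Q" R] card_Un_le[of P Q] by simp
  finally show ?thesis .
qed

lemma card2_pick:
  assumes "card A = 2" "x \<in> A"
  obtains y where "A = {x, y}" "y \<noteq> x"
proof -
  obtain p q where pq: "A = {p, q}" "p \<noteq> q" using assms(1) by (auto simp: card_2_iff)
  show ?thesis
  proof (cases "x = p")
    case True then show ?thesis using that pq by blast
  next
    case False then have "x = q" using assms(2) pq by blast
    then show ?thesis using that pq by (metis insert_commute)
  qed
qed

lemma tri3:
  assumes lf: "loopfree E" and V: "x \<in> V" "y \<in> V" "z \<in> V"
    and a: "adj E x y" "adj E y z" "adj E x z"
  shows "triangle V E {x,y,z}"
proof -
  have d: "x \<noteq> y" "y \<noteq> z" "x \<noteq> z" using lf a unfolding loopfree_def by metis+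
  show ?thesis unfolding triangle_def using V a d by (auto simp: adj_sym)
qed

lemma itm1:
  assumes "triangle V E T" shows "has_induced_triangle_matching V E 1"
  unfolding has_induced_triangle_matching_def
  by (rule exI[of _ "{T}"]) (simp add: induced_triangle_matching_def assms)

lemma upper:
  assumes "loopfree E" "finite V" "\<not> has_induced_triangle_matching V E (t+1)"
  shows "mis V E \<le> B (card V) t"
  using assms
proof (induction "card V" arbitrary: V t rule: less_induct)
  case less
  have lf: "loopfree E" and fin: "finite V" and free: "\<not> has_induced_triangle_matching V E (t+1)"
    using less.prems by auto
  define n where "n = card V"
  have IH0: "mis (V - W) E \<le> B (n - card W) t'"
    if W: "W \<subseteq> V" "W \<noteq> {}" and f: "\<not> has_induced_triangle_matching (V - W) E (t'+1)" for W t'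
  proof -
    have fW: "finite W" using W(1) fin by (rule finite_subset)
    have cW: "card (V - W) = n - card W" unfolding n_def using W(1) fW by (simp add: card_Diff_subset)
    have "card W > 0" using W(2) fW by (simp add: card_gt_0_iff)
    moreover have "card W \<le> n" unfolding n_def using fin W(1) by (simp add: card_mono)
    ultimately have lt: "card (V - W) < card V" using cW n_def by linarith
    have fVW: "finite (V - W)" using fin by simp
    show ?thesis using less(1)[OF lt lf fVW f] cW by simp
  qed
  have IHt: "mis (V - W) E \<le> B (n - card W) t" if "W \<subseteq> V" "W \<noteq> {}" for W
  proof (rule IH0[OF that])
    show "\<not> has_induced_triangle_matching (V - W) E (t+1)"
      using free itm_mono[of "V - W" E "t+1" V] by blast
  qed
  have cb: "card (cls V E X Y) \<le> B (n - k) t"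
    if "X \<subseteq> V" "Y \<subseteq> V" "X \<noteq> {}" "k \<le> card (cl E V X \<union> Y)" for X Y k
  proof -
    let ?W = "cl E V X \<union> Y"
    have W: "?W \<subseteq> V" "?W \<noteq> {}" using that cl_sub[of X V E] unfolding cl_def by auto
    have "card (cls V E X Y) \<le> mis (V - ?W) E" by (rule cls_le[OF lf fin])
    also have "\<dots> \<le> B (n - card ?W) t" by (rule IHt[OF W])
    also have "\<dots> \<le> B (n - k) t" using that(4) by (intro B_mono) simp
    finally show ?thesis .
  qed
  have cV: "card (cl E V X \<union> Y) \<le> n" if "X \<subseteq> V" "Y \<subseteq> V" for X Y
    unfolding n_def using that cl_sub[of X V E] fin by (intro card_mono) auto
  show ?case
  proof (cases "V = {}")
    case True then show ?thesis by (simp add: B_def G_def hh_def mis_empty)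
  next
    case False
    then obtain v0 where "v0 \<in> V" by blast
    obtain v where v: "v \<in> V" and vmin: "\<And>u. u \<in> V \<Longrightarrow> card (nbr E V v) \<le> card (nbr E V u)"
      using ex_has_least_nat[of "\<lambda>x. x \<in> V" v0 "\<lambda>x. card (nbr E V x)"] \<open>v0 \<in> V\<close> by blast
    define d where "d = card (nbr E V v)"
    have cls_cover: "{S. maximal_independent_set V E S} \<subseteq> (\<Union>u\<in>insert v (nbr E V v). cls V E {u} {})"
      using dominate[OF lf _ v] unfolding cls_def by blast
    have Nfin: "finite (insert v (nbr E V v))" using nbr_fin[OF fin] by simp
    have vnot: "v \<notin> nbr E V v" using lf by (simp add: nbr_def loopfree_def)
    have cN: "card (insert v (nbr E V v)) = d + 1" using vnot nbr_fin[OF fin] d_def by simp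
    have NV: "insert v (nbr E V v) \<subseteq> V" using v by (auto simp: nbr_def)
    have dn: "d + 1 \<le> n" using card_mono[OF fin NV] cN n_def by simp
    show ?thesis
    proof (cases "d = 2")
      case False
      have "mis V E \<le> card (\<Union>u\<in>insert v (nbr E V v). cls V E {u} {})"
        unfolding mis_def using cls_cover Nfin cls_fin[OF fin] by (intro card_mono) auto
      also have "\<dots> \<le> (\<Sum>u\<in>insert v (nbr E V v). card (cls V E {u} {}))"
        by (rule card_UN_le[OF Nfin])
      also have "\<dots> \<le> (\<Sum>u\<in>insert v (nbr E V v). B (n - (d+1)) t)"
      proof (rule sum_mono)
        fix u assume u: "u \<in> insert v (nbr E V v)"
        then have uV: "u \<in> V" using NV by blast
        have "d + 1 \<le> card (cl E V {u} \<union> {})"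
          using card_cl_single[OF lf fin, of u] vmin[OF uV] d_def by simp
        then show "card (cls V E {u} {}) \<le> B (n - (d+1)) t" using cb[of "{u}" "{}" "d+1"] uV by simp
      qed
      also have "\<dots> = (d+1) * B (n - (d+1)) t" using cN by simp
      also have "\<dots> \<le> B n t" by (rule NK[OF False dn])
      finally show ?thesis unfolding n_def .
    next
      case True
      have deg2: "2 \<le> card (nbr E V u)" if "u \<in> V" for u using vmin[OF that] True d_def by simp
      have nsym: "u \<in> nbr E V w \<longleftrightarrow> w \<in> nbr E V u" if "u \<in> V" "w \<in> V" for u w
        using that by (auto simp: nbr_def adj_sym)
      have inb: "u \<in> V \<and> adj E w u" if "u \<in> nbr E V w" for u w
        using that by (simp add: nbr_def)
      have n3: "3 \<le> n" using dn True by simp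
      have c3: "3 \<le> card (cl E V {u} \<union> {})" if "u \<in> V" for u
        using card_cl_single[OF lf fin, of u] deg2[OF that] by simp
      have main2: "mis V E \<le> B n t"
        if ab: "nbr E V v = {a,b}" "a \<noteq> b" and b3: "3 \<le> card (nbr E V b)" for a b
      proof -
        have aV: "a \<in> V" and va: "adj E v a" using inb[of a v] ab(1) by auto
        have bV: "b \<in> V" and vb: "adj E v b" using inb[of b v] ab(1) by auto
        have c4b: "4 \<le> card (cl E V {b} \<union> {})" using card_cl_single[OF lf fin, of b] b3 by simp
        have n4: "4 \<le> n" using cV[of "{b}" "{}"] bV c4b by simp
        have dom: "v \<in> S \<or> a \<in> S \<or> b \<in> S" if "maximal_independent_set V E S" for S
          using dominate[OF lf that v] ab(1) by auto
        show ?thesis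
        proof (cases "adj E a b")
          case True
          have t1: "t \<ge> 1"
          proof (rule ccontr)
            assume "\<not> t \<ge> 1" then have t0: "t = 0" by simp
            have "triangle V E {v,a,b}" using tri3[OF lf v aV bV va True vb] .
            then have "has_induced_triangle_matching V E 1" by (rule itm1)
            then show False using free t0 by simp
          qed
          have "mis V E \<le> card (cls V E {v} {}) + card (cls V E {a} {}) + card (cls V E {b} {})"
            unfolding mis_def by (intro card_cover3 cls_fin[OF fin]) (use dom in \<open>auto simp: cls_def\<close>)
          also have "\<dots> \<le> B (n-3) t + B (n-3) t + B (n-4) t"
            using cb[of "{v}" "{}" 3] cb[of "{a}" "{}" 3] cb[of "{b}" "{}" 4] c3 c4b v aV bV
            by (intro add_mono) auto
          also have "\<dots> \<le> B n t" using N5[OF n4 t1] by simp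
          finally show ?thesis .
        next
          case False
          have bn: "b \<notin> cl E V {a}" using False ab(2) unfolding cl_single nbr_def by auto
          have "3 \<le> card (cl E V {a})" using c3[OF aV] by simp
          then have c4a: "4 \<le> card (cl E V {a} \<union> {b})"
            using bn cl_sub[of "{a}" V E] aV fin by (simp add: finite_subset)
          have "mis V E \<le> card (cls V E {v} {}) + card (cls V E {b} {}) + card (cls V E {a} {b})"
            unfolding mis_def by (intro card_cover3 cls_fin[OF fin]) (use dom in \<open>auto simp: cls_def\<close>)
          also have "\<dots> \<le> B (n-3) t + B (n-4) t + B (n-4) t"
            using cb[of "{v}" "{}" 3] cb[of "{b}" "{}" 4] cb[of "{a}" "{b}" 4] c3 c4b c4a v aV bV
            by (intro add_mono) auto
          also have "\<dots> \<le> B n t" using N2[OF n4, of t] by simp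
          finally show ?thesis .
        qed
      qed
      have both2: "mis V E \<le> B n t"
        if ab: "nbr E V v = {a,b}" "a \<noteq> b" and a2: "card (nbr E V a) = 2" and b2: "card (nbr E V b) = 2" for a b
      proof -
        have aV: "a \<in> V" and va: "adj E v a" using inb[of a v] ab(1) by auto
        have bV: "b \<in> V" and vb: "adj E v b" using inb[of b v] ab(1) by auto
        have av: "adj E a v" "adj E b v" using va vb by (auto simp: adj_sym)
        have vna: "v \<in> nbr E V a" "v \<in> nbr E V b" using v av by (auto simp: nbr_def)
        have dom: "v \<in> S \<or> a \<in> S \<or> b \<in> S" if "maximal_independent_set V E S" for S
          using dominate[OF lf that v] ab(1) by auto
        show ?thesis
        proof (cases "adj E a b")
          case True
          have vb': "v \<noteq> b" "v \<noteq> a" using lf va vb unfolding loopfree_def by metis+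
          have na: "nbr E V a = {v,b}"
          proof -
            have "{v,b} \<subseteq> nbr E V a" using vna True bV by (auto simp: nbr_def)
            moreover have "card {v,b} = 2" using vb' by simp
            ultimately show ?thesis using a2 nbr_fin[OF fin] by (metis card_subset_eq)
          qed
          have nb: "nbr E V b = {v,a}"
          proof -
            have "{v,a} \<subseteq> nbr E V b" using vna True aV by (auto simp: nbr_def adj_sym)
            moreover have "card {v,a} = 2" using vb' by simp
            ultimately show ?thesis using b2 nbr_fin[OF fin] by (metis card_subset_eq)
          qed
          define T where "T = {v,a,b}"
          have triT: "triangle V E T" unfolding T_def using tri3[OF lf v aV bV va True vb] .
          have cT: "card T = 3" using triT by (simp add: triangle_def)
          have TV: "T \<subseteq> V" using triT by (simp add: triangle_def)
          have clT: "cl E V {u} \<union> {} = T" if "u \<in> T" for u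
            using that ab(1) na nb unfolding T_def cl_single by auto
          obtain t' where t': "t = Suc t'"
          proof (cases t)
            case 0
            then have "has_induced_triangle_matching V E 1" using itm1[OF triT] by simp
            then show ?thesis using free 0 by simp
          next
            case (Suc k) then show ?thesis using that by blast
          qed
          have noadj: "\<not> adj E u w" if "u \<in> T" "w \<in> V" "w \<notin> T" for u w
          proof
            assume "adj E u w"
            then have "w \<in> nbr E V u" using that(2) by (simp add: nbr_def)
            then show False using that ab(1) na nb unfolding T_def by auto
          qed
          have fT: "\<not> has_induced_triangle_matching (V - T) E (t'+1)"
          proof
            assume "has_induced_triangle_matching (V - T) E (t'+1)"
            then obtain M where M: "induced_triangle_matching (V - T) E M" "card M = t'+1"
              unfolding has_induced_triangle_matching_def by blast
            have sub: "T' \<subseteq> V - T" if "T' \<in> M" for T'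
              using M(1) that unfolding induced_triangle_matching_def triangle_def by blast
            have triM: "triangle V E T'" if "T' \<in> M" for T'
              using M(1) that unfolding induced_triangle_matching_def triangle_def by blast
            have Mfin: "finite M"
              by (rule finite_subset[of _ "Pow V"]) (use sub fin in auto)
            have TM: "T \<notin> M" using sub[of T] unfolding T_def by blast
            have pw: "\<forall>T1\<in>insert T M. \<forall>T2\<in>insert T M. T1 \<noteq> T2 \<longrightarrow>
                        T1 \<inter> T2 = {} \<and> (\<forall>u\<in>T1. \<forall>w\<in>T2. \<not> adj E u w)"
            proof (intro ballI impI)
              fix T1 T2 assume T1: "T1 \<in> insert T M" and T2: "T2 \<in> insert T M" and ne: "T1 \<noteq> T2"
              consider (a) "T1 = T" "T2 \<in> M" | (b) "T1 \<in> M" "T2 = T" | (c) "T1 \<in> M" "T2 \<in> M"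
                using T1 T2 ne by blast
              then show "T1 \<inter> T2 = {} \<and> (\<forall>u\<in>T1. \<forall>w\<in>T2. \<not> adj E u w)"
              proof cases
                case a then show ?thesis using sub[of T2] noadj by blast
              next
                case b
                have s: "T1 \<subseteq> V - T" using b sub by blast
                have "\<forall>u\<in>T1. \<forall>w\<in>T2. \<not> adj E u w" using s b noadj by (metis Diff_iff adj_sym subsetD)
                then show ?thesis using s b by blast
              next
                case c then show ?thesis using M(1) ne unfolding induced_triangle_matching_def by blast
              qed
            qed
            have "induced_triangle_matching V E (insert T M)"
              unfolding induced_triangle_matching_def using pw triT triM by blast
            moreover have "card (insert T M) = t + 1" using Mfin TM M(2) t' by simp
            ultimately show False using free unfolding has_induced_triangle_matching_def by blast
          qed
          have mT: "mis (V - T) E \<le> B (n-3) t'"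
            using IH0[OF TV _ fT] cT unfolding T_def by simp
          have clsT: "card (cls V E {u} {}) \<le> B (n-3) t'" if "u \<in> T" for u
            using cls_le[OF lf fin, of "{u}" "{}"] clT[OF that] mT by simp
          have "mis V E \<le> card (cls V E {v} {}) + card (cls V E {a} {}) + card (cls V E {b} {})"
            unfolding mis_def by (intro card_cover3 cls_fin[OF fin]) (use dom in \<open>auto simp: cls_def\<close>)
          also have "\<dots> \<le> B (n-3) t' + B (n-3) t' + B (n-3) t'"
            using clsT unfolding T_def by (intro add_mono) auto
          also have "\<dots> \<le> B n t" using N4[OF n3, of t'] t' by simp
          finally show ?thesis .
        next
          case False
          obtain a' where na: "nbr E V a = {v,a'}" "a' \<noteq> v" using card2_pick[OF a2 vna(1)] by blast
          obtain b' where nb: "nbr E V b = {v,b'}" "b' \<noteq> v" using card2_pick[OF b2 vna(2)] by blast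
          have a'V: "a' \<in> V" and aa': "adj E a a'" using inb[of a' a] na(1) by auto
          have b'V: "b' \<in> V" and bb': "adj E b b'" using inb[of b' b] nb(1) by auto
          have dist: "a' \<noteq> a" "b' \<noteq> b" "a' \<noteq> b" "b' \<noteq> a" "v \<noteq> a" "v \<noteq> b"
            using lf aa' bb' False va vb unfolding loopfree_def by (metis adj_sym)+
          have domA: "a \<in> S \<or> v \<in> S \<or> a' \<in> S" if "maximal_independent_set V E S" for S
            using dominate[OF lf that aV] na(1) by auto
          have domB: "b \<in> S \<or> v \<in> S \<or> b' \<in> S" if "maximal_independent_set V E S" for S
            using dominate[OF lf that bV] nb(1) by auto
          have indep: "\<not> (x \<in> S \<and> y \<in> S)" if "maximal_independent_set V E S" "adj E x y" for S x y
            using that unfolding maximal_independent_set_def independent_set_def by blast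
          have cov: "{S. maximal_independent_set V E S} \<subseteq>
                 cls V E {v} {} \<union> cls V E {a,b} {} \<union> cls V E {a,b'} {} \<union> cls V E {b,a'} {}"
          proof
            fix S assume S: "S \<in> {S. maximal_independent_set V E S}"
            then have m: "maximal_independent_set V E S" by simp
            note h = dom[OF m] domA[OF m] domB[OF m] indep[OF m va] indep[OF m vb]
            show "S \<in> cls V E {v} {} \<union> cls V E {a,b} {} \<union> cls V E {a,b'} {} \<union> cls V E {b,a'} {}"
              using h m unfolding cls_def by blast
          qed
          have clsv: "card (cls V E {v} {}) \<le> B (n-3) t"
            using cb[of "{v}" "{}" 3] c3[OF v] v by simp
          have s5: "{a,b,v,a',b'} \<subseteq> cl E V X" if "X = {a,b} \<or> X = {a,b'} \<or> X = {b,a'}" for X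
            using that aV bV v a'V b'V aa' bb' va vb unfolding cl_def by (auto simp: adj_sym)
          have clf: "finite (cl E V X)" if "X \<subseteq> V" for X
            using cl_sub[OF that] fin by (rule finite_subset)
          show ?thesis
          proof (cases "a' = b'")
            case True
            have e1: "cls V E {a,b'} {} = {}" using True aa' by (intro cls_empty) auto
            have e2: "cls V E {b,a'} {} = {}" using True bb' by (intro cls_empty) auto
            have "card {a,b,v,a'} = 4" using dist True ab(2) na(2) by auto
            moreover have "{a,b,v,a'} \<subseteq> cl E V {a,b}" using s5[of "{a,b}"] by auto
            ultimately have c4: "4 \<le> card (cl E V {a,b} \<union> {})"
              using clf[of "{a,b}"] aV bV by (metis card_mono empty_subsetI insert_subset sup_bot.right_neutral)
            have n4: "4 \<le> n" using cV[of "{a,b}" "{}"] aV bV c4 by simp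
            have "mis V E \<le> card (cls V E {v} {}) + card (cls V E {a,b} {}) + card (cls V E {a,b'} {}) + card (cls V E {b,a'} {})"
              unfolding mis_def by (intro card_cover4 cls_fin[OF fin] cov)
            also have "\<dots> \<le> B (n-3) t + B (n-4) t"
              using clsv cb[of "{a,b}" "{}" 4] c4 aV bV e1 e2 by simp
            also have "\<dots> \<le> B n t" using N2[OF n4, of t] by simp
            finally show ?thesis .
          next
            case False
            have "card {a,b,v,a',b'} = 5" using dist False ab(2) na(2) nb(2) by auto
            then have c5: "5 \<le> card (cl E V X \<union> {})" if "X = {a,b} \<or> X = {a,b'} \<or> X = {b,a'}" for X
              using s5[OF that] clf[of X] that aV bV a'V b'V
              by (metis card_mono empty_subsetI insert_subset sup_bot.right_neutral)
            have n5: "5 \<le> n" using cV[of "{a,b}" "{}"] aV bV c5[of "{a,b}"] by simp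
            have "mis V E \<le> card (cls V E {v} {}) + card (cls V E {a,b} {}) + card (cls V E {a,b'} {}) + card (cls V E {b,a'} {})"
              unfolding mis_def by (intro card_cover4 cls_fin[OF fin] cov)
            also have "\<dots> \<le> B (n-3) t + B (n-5) t + B (n-5) t + B (n-5) t"
              using clsv cb[of "{a,b}" "{}" 5] cb[of "{a,b'}" "{}" 5] cb[of "{b,a'}" "{}" 5]
                c5 aV bV a'V b'V by (intro add_mono) auto
            also have "\<dots> \<le> B n t" using N3[OF n5, of t] by simp
            finally show ?thesis .
          qed
        qed
      qed
      obtain a b where ab: "nbr E V v = {a,b}" "a \<noteq> b" using True d_def by (auto simp: card_2_iff)
      have aV: "a \<in> V" "b \<in> V" using inb ab(1) by auto
      have "mis V E \<le> B n t"
      proof (cases "3 \<le> card (nbr E V b)")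
        case True then show ?thesis using main2[OF ab] by blast
      next
        case nb: False
        show ?thesis
        proof (cases "3 \<le> card (nbr E V a)")
          case True
          have ba: "nbr E V v = {b,a}" "b \<noteq> a" using ab by auto
          show ?thesis using main2[OF ba True] .
        next
          case False
          have "card (nbr E V a) = 2" using deg2[OF aV(1)] False by simp
          moreover have "card (nbr E V b) = 2" using deg2[OF aV(2)] nb by simp
          ultimately show ?thesis using both2[OF ab] by blast
        qed
      qed
      then show ?thesis unfolding n_def .
    qed
  qed
qed

lemma mis_prod:
  assumes lf: "loopfree E" and fA: "finite A" and fC: "finite C" and dj: "A \<inter> C = {}"
    and na: "\<forall>x\<in>A. \<forall>y\<in>C. \<not> adj E x y"
  shows "mis A E * mis C E \<le> mis (A \<union> C) E"
proof -
  let ?MA = "{S. maximal_independent_set A E S}" and ?MC = "{S. maximal_independent_set C E S}"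
  have "mis A E * mis C E = card (?MA \<times> ?MC)" unfolding mis_def by (simp add: card_cartesian_product)
  also have "\<dots> \<le> card {S. maximal_independent_set (A \<union> C) E S}"
  proof (rule card_inj_on_le)
    show "inj_on (\<lambda>(S1,S2). S1 \<union> S2) (?MA \<times> ?MC)"
    proof (rule inj_onI, clarsimp)
      fix S1 S2 S1' S2'
      assume m: "maximal_independent_set A E S1" "maximal_independent_set C E S2"
        "maximal_independent_set A E S1'" "maximal_independent_set C E S2'"
        and eq: "S1 \<union> S2 = S1' \<union> S2'"
      have sub: "S1 \<subseteq> A" "S2 \<subseteq> C" "S1' \<subseteq> A" "S2' \<subseteq> C"
        using m unfolding maximal_independent_set_def independent_set_def by auto
      have "S1 = (S1 \<union> S2) \<inter> A" "S1' = (S1' \<union> S2') \<inter> A"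
        "S2 = (S1 \<union> S2) \<inter> C" "S2' = (S1' \<union> S2') \<inter> C"
        using sub dj by auto
      then show "S1 = S1' \<and> S2 = S2'" using eq by metis
    qed
    show "(\<lambda>(S1,S2). S1 \<union> S2) ` (?MA \<times> ?MC) \<subseteq> {S. maximal_independent_set (A \<union> C) E S}"
    proof clarsimp
      fix S1 S2 assume m1: "maximal_independent_set A E S1" and m2: "maximal_independent_set C E S2"
      have i1: "independent_set A E S1" and d1: "\<forall>w\<in>A-S1. \<exists>s\<in>S1. adj E w s"
        using m1 mis_char[OF lf] by auto
      have i2: "independent_set C E S2" and d2: "\<forall>w\<in>C-S2. \<exists>s\<in>S2. adj E w s"
        using m2 mis_char[OF lf] by auto
      have s: "S1 \<subseteq> A" "S2 \<subseteq> C" using i1 i2 by (auto simp: independent_set_def)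
      have "independent_set (A \<union> C) E (S1 \<union> S2)"
        unfolding independent_set_def
      proof (intro conjI ballI)
        show "S1 \<union> S2 \<subseteq> A \<union> C" using s by auto
        fix u w assume u: "u \<in> S1 \<union> S2" and w: "w \<in> S1 \<union> S2"
        show "\<not> adj E u w"
          using u w i1 i2 s na unfolding independent_set_def by (metis Un_iff adj_sym subsetD)
      qed
      moreover have "\<forall>w\<in>(A \<union> C) - (S1 \<union> S2). \<exists>s\<in>S1 \<union> S2. adj E w s"
        using d1 d2 by blast
      ultimately show "maximal_independent_set (A \<union> C) E (S1 \<union> S2)" using mis_char[OF lf] by blast
    qed
    show "finite {S. maximal_independent_set (A \<union> C) E S}" using fA fC by (intro mis_fin) simp
  qed
  finally show ?thesis unfolding mis_def .
qed

lemma mis_clique: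
  assumes lf: "loopfree E" and fK: "finite K" and cq: "\<forall>x\<in>K. \<forall>y\<in>K. x \<noteq> y \<longrightarrow> adj E x y"
  shows "card K \<le> mis K E"
  unfolding mis_def
proof (rule card_inj_on_le)
  show "inj_on (\<lambda>x. {x}) K" by simp
  show "(\<lambda>x. {x}) ` K \<subseteq> {S. maximal_independent_set K E S}"
  proof clarsimp
    fix x assume x: "x \<in> K"
    have "independent_set K E {x}" using x lf by (simp add: independent_set_def loopfree_def)
    moreover have "\<forall>w\<in>K - {x}. \<exists>s\<in>{x}. adj E w s" using cq x by (auto simp: adj_sym)
    ultimately show "maximal_independent_set K E {x}" using mis_char[OF lf] by blast
  qed
  show "finite {S. maximal_independent_set K E S}" using fK by (rule mis_fin)
qed

lemma mis_step:
  assumes lf: "loopfree E" and ab: "a \<le> b"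
    and cq: "\<And>x y. a \<le> x \<Longrightarrow> x < b \<Longrightarrow> a \<le> y \<Longrightarrow> y < b \<Longrightarrow> x \<noteq> y \<Longrightarrow> adj E x y"
    and na: "\<And>x y. x < a \<Longrightarrow> a \<le> y \<Longrightarrow> y < b \<Longrightarrow> \<not> adj E x y"
  shows "mis {0..<a} E * (b - a) \<le> mis {0..<b} E"
proof -
  have "mis {0..<a} E * (b - a) \<le> mis {0..<a} E * mis {a..<b} E"
    using mis_clique[OF lf, of "{a..<b}"] cq by (intro mult_le_mono2) auto
  also have "\<dots> \<le> mis ({0..<a} \<union> {a..<b}) E"
    by (rule mis_prod[OF lf]) (use na in auto)
  also have "{0..<a} \<union> {a..<b} = {0..<b}" using ab by auto
  finally show ?thesis .
qed

lemma adj_gen: "adj {{x,y} | x y. R x y} u v \<longleftrightarrow> R u v \<or> R v u"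
  unfolding adj_def by (auto simp: doubleton_eq_iff)

lemma div3_eq: "3*i \<le> (x::nat) \<Longrightarrow> x < 3*i+3 \<Longrightarrow> x div 3 = i" by presburger
lemma div2_eq: "2*i \<le> (x::nat) \<Longrightarrow> x < 2*i+2 \<Longrightarrow> x div 2 = i" by presburger
lemma div3_lt: "(x::nat) < 3*i \<Longrightarrow> x div 3 < i" by presburger
lemma div2_lt: "(x::nat) < 2*i \<Longrightarrow> x div 2 < i" by presburger
lemma five: "(x::nat) < 5 \<Longrightarrow> x = 0 \<or> x = 1 \<or> x = 2 \<or> x = 3 \<or> x = 4" by arith
lemma c5: "(x::nat) < 5 \<Longrightarrow> y < 5 \<Longrightarrow> z < 5 \<Longrightarrow> x \<noteq> y \<Longrightarrow> y \<noteq> z \<Longrightarrow> x \<noteq> z \<Longrightarrow>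
   ((x+1) mod 5 = y \<or> (y+1) mod 5 = x) \<Longrightarrow> ((y+1) mod 5 = z \<or> (z+1) mod 5 = y) \<Longrightarrow> ((x+1) mod 5 = z \<or> (z+1) mod 5 = x) \<Longrightarrow> False"
  apply (drule five)+ apply (elim disjE) by simp_all

definition compK :: "nat \<Rightarrow> nat \<Rightarrow> nat" where
  "compK p x = (if x < 3*p then x div 3 else p + (x - 3*p) div 2)"

definition EK :: "nat \<Rightarrow> nat \<Rightarrow> nat set set" where
  "EK n p = {{x,y} | x y. x < n \<and> y < n \<and> x \<noteq> y \<and> compK p x = compK p y}"

lemma adjK: "adj (EK n p) u v \<longleftrightarrow> u < n \<and> v < n \<and> u \<noteq> v \<and> compK p u = compK p v"
  unfolding EK_def adj_gen by auto

lemma lfK: "loopfree (EK n p)" by (simp add: loopfree_def adjK)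

lemma sgK: "simple_graph {0..<n} (EK n p)"
  unfolding simple_graph_def EK_def by auto

lemma misK1: "i \<le> p \<Longrightarrow> 3*p \<le> n \<Longrightarrow> 3^i \<le> mis {0..<3*i} (EK n p)"
proof (induction i)
  case 0 then show ?case by (simp add: mis_empty)
next
  case (Suc i)
  have "mis {0..<3*i} (EK n p) * (3*Suc i - 3*i) \<le> mis {0..<3*Suc i} (EK n p)"
  proof (rule mis_step[OF lfK])
    fix x y assume "3*i \<le> x" "x < 3*Suc i" "3*i \<le> y" "y < 3*Suc i" "x \<noteq> y"
    then show "adj (EK n p) x y" using Suc.prems div3_eq[of i x] div3_eq[of i y] unfolding adjK compK_def by auto
  next
    fix x y assume "x < 3*i" "3*i \<le> y" "y < 3*Suc i"
    then show "\<not> adj (EK n p) x y" using Suc.prems div3_lt[of x i] div3_eq[of i y] unfolding adjK compK_def by auto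
  qed simp
  then show ?case using Suc by simp
qed

lemma misK2: "3*p + 2*j \<le> n \<Longrightarrow> 3^p * 2^j \<le> mis {0..<3*p+2*j} (EK n p)"
proof (induction j)
  case 0 then show ?case using misK1[of p p n] by simp
next
  case (Suc j)
  have "mis {0..<3*p+2*j} (EK n p) * ((3*p+2*Suc j) - (3*p+2*j)) \<le> mis {0..<3*p+2*Suc j} (EK n p)"
  proof (rule mis_step[OF lfK])
    fix x y assume "3*p+2*j \<le> x" "x < 3*p+2*Suc j" "3*p+2*j \<le> y" "y < 3*p+2*Suc j" "x \<noteq> y"
    then show "adj (EK n p) x y" using Suc.prems div2_eq[of j "x-3*p"] div2_eq[of j "y-3*p"] unfolding adjK compK_def by auto
  next
    fix x y assume "x < 3*p+2*j" "3*p+2*j \<le> y" "y < 3*p+2*Suc j"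
    then show "\<not> adj (EK n p) x y" using Suc.prems div2_lt[of "x-3*p" j] div3_lt[of x p] div2_eq[of j "y-3*p"] unfolding adjK compK_def by auto
  qed simp
  then show ?case using Suc by simp
qed

lemma div2_three: assumes "(a::nat) div 2 = b div 2" "b div 2 = c div 2" "a \<noteq> b" "b \<noteq> c" "a \<noteq> c" shows False
proof -
  have e: "a = 2*(a div 2) + a mod 2" "b = 2*(b div 2) + b mod 2" "c = 2*(c div 2) + c mod 2" by simp_all
  have m: "a mod 2 = 0 \<or> a mod 2 = 1" "b mod 2 = 0 \<or> b mod 2 = 1" "c mod 2 = 0 \<or> c mod 2 = 1" by arith+
  show False using e m assms by (smt (verit))
qed

lemma tri_pts:
  assumes "triangle V E T"
  obtains x y z where "T = {x,y,z}" "x \<noteq> y" "y \<noteq> z" "x \<noteq> z" "x \<in> V" "y \<in> V" "z \<in> V"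
    "adj E x y" "adj E y z" "adj E x z"
proof -
  obtain x y z where T: "T = {x,y,z}" "x \<noteq> y" "y \<noteq> z" "x \<noteq> z"
    using assms unfolding triangle_def by (auto simp: card_3_iff)
  then show ?thesis using that assms unfolding triangle_def by auto
qed

lemma compK_lt: "compK p w < p \<longleftrightarrow> w < 3*p"
  unfolding compK_def using div3_lt[of w p] by auto

lemma triK:
  assumes tri: "triangle {0..<n} (EK n p) T"
  shows "\<exists>c<p. T = {3*c, 3*c+1, 3*c+2}"
proof -
  obtain x y z where T: "T = {x,y,z}" "x \<noteq> y" "y \<noteq> z" "x \<noteq> z"
    and a: "adj (EK n p) x y" "adj (EK n p) y z" "adj (EK n p) x z"
    using tri_pts[OF tri] by metis
  have cq: "compK p x = compK p y" "compK p y = compK p z" using a by (auto simp: adjK)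
  show ?thesis
  proof (cases "x < 3*p")
    case True
    define c where "c = x div 3"
    have yz: "y < 3*p" "z < 3*p" using cq compK_lt[of p x] compK_lt[of p y] compK_lt[of p z] True by auto
    have dc: "y div 3 = c" "z div 3 = c" using cq True yz unfolding c_def compK_def by auto
    have cp: "c < p" using True div3_lt c_def by blast
    have sub: "T \<subseteq> {3*c, 3*c+1, 3*c+2}"
    proof -
      have "w \<in> {3*c, 3*c+1, 3*c+2}" if "w div 3 = c" for w :: nat using that by auto
      then show ?thesis using T dc c_def by auto
    qed
    have "card T = 3" using T by auto
    moreover have "card {3*c, 3*c+1, 3*c+2} = 3" by simp
    ultimately have "T = {3*c, 3*c+1, 3*c+2}" using sub by (metis card_subset_eq finite.emptyI finite.insertI)
    then show ?thesis using cp by blast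
  next
    case False
    have yz: "\<not> y < 3*p" "\<not> z < 3*p" using cq compK_lt[of p x] compK_lt[of p y] compK_lt[of p z] False by auto
    have "(x - 3*p) div 2 = (y - 3*p) div 2" "(y - 3*p) div 2 = (z - 3*p) div 2"
      using cq False yz unfolding compK_def by auto
    moreover have "x - 3*p \<noteq> y - 3*p" "y - 3*p \<noteq> z - 3*p" "x - 3*p \<noteq> z - 3*p"
      using T False yz by auto
    ultimately show ?thesis using div2_three by blast
  qed
qed

lemma freeK:
  assumes "p \<le> t"
  shows "\<not> has_induced_triangle_matching {0..<n} (EK n p) (t+1)"
proof
  assume "has_induced_triangle_matching {0..<n} (EK n p) (t+1)"
  then obtain M where M: "induced_triangle_matching {0..<n} (EK n p) M" "card M = t+1"
    unfolding has_induced_triangle_matching_def by blast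
  have "M \<subseteq> (\<lambda>c. {3*c, 3*c+1, 3*c+2}) ` {..<p}"
  proof
    fix T assume "T \<in> M"
    then have "triangle {0..<n} (EK n p) T" using M(1) by (simp add: induced_triangle_matching_def)
    then obtain c where "c < p" "T = {3*c, 3*c+1, 3*c+2}" using triK by blast
    then show "T \<in> (\<lambda>c. {3*c, 3*c+1, 3*c+2}) ` {..<p}" by blast
  qed
  then have "card M \<le> card ((\<lambda>c. {3*c, 3*c+1, 3*c+2}) ` {..<p})" by (intro card_mono) auto
  also have "\<dots> \<le> p" using card_image_le[of "{..<p}"] by simp
  finally show False using M(2) assms by simp
qed

definition compC :: "nat \<Rightarrow> nat" where
  "compC x = (if x < 5 then 0 else Suc ((x - 5) div 2))"

definition RC :: "nat \<Rightarrow> nat \<Rightarrow> nat \<Rightarrow> bool" where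
  "RC n x y \<longleftrightarrow> x < n \<and> y < n \<and> x \<noteq> y \<and> compC x = compC y \<and>
     (x < 5 \<longrightarrow> ((x+1) mod 5 = y \<or> (y+1) mod 5 = x))"

definition EC :: "nat \<Rightarrow> nat set set" where
  "EC n = {{x,y} | x y. RC n x y}"

lemma RC_sym: "RC n x y \<longleftrightarrow> RC n y x"
  unfolding RC_def compC_def by (auto split: if_splits)

lemma adjC: "adj (EC n) u v \<longleftrightarrow> RC n u v"
  unfolding EC_def adj_gen using RC_sym by blast

lemma lfC: "loopfree (EC n)" by (simp add: loopfree_def adjC RC_def)

lemma sgC: "simple_graph {0..<n} (EC n)"
  unfolding simple_graph_def EC_def RC_def by auto

lemma adjC5: "u < 5 \<Longrightarrow> v < 5 \<Longrightarrow> 5 \<le> n \<Longrightarrow> adj (EC n) u v \<longleftrightarrow> u \<noteq> v \<and> ((u+1) mod 5 = v \<or> (v+1) mod 5 = u)"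
  unfolding adjC RC_def compC_def by auto

lemma misC5: assumes "5 \<le> n" shows "5 \<le> mis {0..<5} (EC n)"
proof -
  have V: "{0..<5::nat} = {0,1,2,3,4}" by auto
  have m: "maximal_independent_set {0..<5} (EC n) S"
    if "S \<in> {{0,2},{1,3},{2,4},{0,3},{1,4}}" for S
  proof -
    have "independent_set {0..<5} (EC n) S \<and> (\<forall>w\<in>{0..<5}-S. \<exists>s\<in>S. adj (EC n) w s)"
      using that assms unfolding independent_set_def V by (auto simp: adjC5)
    then show ?thesis using mis_char[OF lfC] by blast
  qed
  have "card {{0,2},{1,3},{2,4},{0,3},{1,4::nat}} = 5" by (simp add: doubleton_eq_iff)
  moreover have "card {{0,2},{1,3},{2,4},{0,3},{1,4::nat}} \<le> mis {0..<5} (EC n)"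
    unfolding mis_def using m by (intro card_mono mis_fin) auto
  ultimately show ?thesis by simp
qed

lemma misC: "5 + 2*j \<le> n \<Longrightarrow> 5 * 2^j \<le> mis {0..<5+2*j} (EC n)"
proof (induction j)
  case 0 then show ?case using misC5 by simp
next
  case (Suc j)
  have "mis {0..<5+2*j} (EC n) * ((5+2*Suc j) - (5+2*j)) \<le> mis {0..<5+2*Suc j} (EC n)"
  proof (rule mis_step[OF lfC])
    fix x y assume "5+2*j \<le> x" "x < 5+2*Suc j" "5+2*j \<le> y" "y < 5+2*Suc j" "x \<noteq> y"
    then show "adj (EC n) x y" using Suc.prems div2_eq[of j "x-5"] div2_eq[of j "y-5"]
      unfolding adjC RC_def compC_def by auto
  next
    fix x y assume "x < 5+2*j" "5+2*j \<le> y" "y < 5+2*Suc j"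
    then show "\<not> adj (EC n) x y" using Suc.prems div2_lt[of "x-5" j] div2_eq[of j "y-5"]
      unfolding adjC RC_def compC_def by auto
  qed simp
  then show ?case using Suc by simp
qed

lemma triC: assumes "triangle {0..<n} (EC n) T" shows False
proof -
  obtain x y z where T: "T = {x,y,z}" "x \<noteq> y" "y \<noteq> z" "x \<noteq> z"
    and a: "adj (EC n) x y" "adj (EC n) y z" "adj (EC n) x z"
    using tri_pts[OF assms] by metis
  have r: "RC n x y" "RC n y z" "RC n x z" using a by (auto simp: adjC)
  show False
  proof (cases "x < 5")
    case True
    then have "y < 5" "z < 5" using r unfolding RC_def compC_def by (auto split: if_splits)
    then show False using c5[of x y z] True r T unfolding RC_def by blast
  next
    case False
    then have yz: "\<not> y < 5" "\<not> z < 5" using r unfolding RC_def compC_def by (auto split: if_splits)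
    have "(x - 5) div 2 = (y - 5) div 2" "(y - 5) div 2 = (z - 5) div 2"
      using r False yz unfolding RC_def compC_def by auto
    moreover have "x - 5 \<noteq> y - 5" "y - 5 \<noteq> z - 5" "x - 5 \<noteq> z - 5" using T False yz by auto
    ultimately show False using div2_three by blast
  qed
qed

lemma freeC: "\<not> has_induced_triangle_matching {0..<n} (EC n) (0+1)"
proof
  assume "has_induced_triangle_matching {0..<n} (EC n) (0+1)"
  then obtain M where M: "induced_triangle_matching {0..<n} (EC n) M" "card M = 1"
    unfolding has_induced_triangle_matching_def by auto
  then obtain T where "M = {T}" by (auto simp: card_1_singleton_iff)
  then have "triangle {0..<n} (EC n) T" using M(1) unfolding induced_triangle_matching_def by auto
  then show False by (rule triC)
qed

lemma sg_lf: "simple_graph V E \<Longrightarrow> loopfree E"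
  unfolding simple_graph_def loopfree_def adj_def by (metis doubleton_eq_iff insert_absorb2)

lemma B_val:
  fixes n t :: nat
  assumes "3 * t \<le> n" and "t = 0 \<Longrightarrow> n \<ge> 4"
  shows "B n t = (if even (n - 3 * t) then 3 ^ t * 2 ^ ((n - 3 * t) div 2)
     else if t > 0 then 3 ^ (t - 1) * 2 ^ ((n - 3 * t + 3) div 2)
     else 5 * 2 ^ ((n - 5) div 2))"
proof (cases "t = 0")
  case True
  then show ?thesis using B_high[OF assms(1)] assms(2) by (simp add: G_def hh_def)
next
  case False
  then show ?thesis using B_high[OF assms(1)] by (simp add: G_def)
qed

theorem mainTheorem1:
  fixes n t :: nat
  assumes "n \<ge> 1" and "3 * t \<le> n" and "t = 0 \<Longrightarrow> n \<ge> 4"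
  shows "mis_t t n =
    (if even (n - 3 * t) then 3 ^ t * 2 ^ ((n - 3 * t) div 2)
     else if t > 0 then 3 ^ (t - 1) * 2 ^ ((n - 3 * t + 3) div 2)
     else 5 * 2 ^ ((n - 5) div 2))" (is "_ = ?R")
proof -
  let ?S = "{mis {0..<n} E | E. simple_graph {0..<n} E \<and>
                       \<not> has_induced_triangle_matching {0..<n} E (t + 1)}"
  have BR: "B n t = ?R" using B_val[OF assms(2,3)] .
  have fin: "finite ?S"
  proof (rule finite_subset)
    show "?S \<subseteq> (\<lambda>E. mis {0..<n} E) ` Pow (Pow {0..<n})"
    proof
      fix y assume "y \<in> ?S"
      then obtain E where y: "y = mis {0..<n} E" and sg: "simple_graph {0..<n} E" by blast
      have "E \<subseteq> Pow {0..<n}"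
      proof
        fix e assume "e \<in> E"
        then obtain u v where "e = {u,v}" "u \<in> {0..<n}" "v \<in> {0..<n}"
          using sg unfolding simple_graph_def by blast
        then show "e \<in> Pow {0..<n}" by auto
      qed
      then show "y \<in> (\<lambda>E. mis {0..<n} E) ` Pow (Pow {0..<n})" using y by blast
    qed
  qed simp
  have up: "mis {0..<n} E \<le> ?R"
    if "simple_graph {0..<n} E" "\<not> has_induced_triangle_matching {0..<n} E (t + 1)" for E
    using upper[OF sg_lf[OF that(1)] _ that(2)] BR by simp
  have wit: "\<exists>E. simple_graph {0..<n} E \<and> \<not> has_induced_triangle_matching {0..<n} E (t + 1)
               \<and> ?R \<le> mis {0..<n} E"
  proof (cases "even (n - 3*t)")
    case True
    define j where "j = (n - 3*t) div 2"
    have nj: "3*t + 2*j = n" using True assms(2) unfolding j_def by simp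
    have "3^t * 2^j \<le> mis {0..<3*t+2*j} (EK n t)" by (rule misK2) (rule eq_imp_le[OF nj])
    then show ?thesis using True sgK freeK[of t t] nj unfolding j_def by (intro exI[of _ "EK n t"]) auto
  next
    case odd: False
    show ?thesis
    proof (cases "t > 0")
      case True
      define j where "j = (n - 3*t + 3) div 2"
      have nj: "3*(t-1) + 2*j = n" using odd True assms(2) unfolding j_def by simp
      have "3^(t-1) * 2^j \<le> mis {0..<3*(t-1)+2*j} (EK n (t-1))" by (rule misK2) (rule eq_imp_le[OF nj])
      then show ?thesis using odd True sgK freeK[of "t-1" t] nj unfolding j_def
        by (intro exI[of _ "EK n (t-1)"]) auto
    next
      case False
      then have t0: "t = 0" by simp
      have n5: "n \<ge> 5" using odd t0 assms(3) by (cases "n = 4") auto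
      define j where "j = (n - 5) div 2"
      have nj: "5 + 2*j = n" using odd t0 n5 unfolding j_def by simp
      have "5 * 2^j \<le> mis {0..<5+2*j} (EC n)" by (rule misC) (rule eq_imp_le[OF nj])
      then show ?thesis using odd t0 sgC freeC nj unfolding j_def
        by (intro exI[of _ "EC n"]) auto
    qed
  qed
  then obtain E0 where E0: "simple_graph {0..<n} E0" "\<not> has_induced_triangle_matching {0..<n} E0 (t + 1)"
    "?R \<le> mis {0..<n} E0" by blast
  have eq: "mis {0..<n} E0 = ?R" using up[OF E0(1,2)] E0(3) by simp
  have Rin: "?R \<in> ?S"
    by (rule CollectI, rule exI[of _ E0]) (use eq E0(1,2) in simp)
  have "Max ?S = ?R"
    by (rule Max_eqI[OF fin _ Rin]) (use up in blast)
  then show ?thesis unfolding mis_t_def .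
qed

end
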